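(* Let $n\geq 3$. Let $H$ be the $n!\times(n-1)^2$ $0/1$ matrix with rows indexed by $S(n)$, columns indexed by ordered pairs $(i,j)$ with $i,j\in\{1,\dots,n-1\}$, and $(\pi,(i,j))$-entry equal to $1$ iff $\pi(i)=j$. Let $N$ be the submatrix of $H$ formed by the rows indexed by derangements of $\{1,\dots,n\}$, and let $[N|\mathbf 1]$ be $N$ with an extra all-ones column appended. If $y$ (indexed by the columns of $H$ together with one extra coordinate for the appended column) satisfies $[N|\mathbf 1]y=0$, then there is a scalar $c$ such that $y_{(i,j)}=c$ for all $i\neq j$ in $\{1,\dots,n-1\}$ and the extra coordinate of $y$ equals $-(n-2)c$; i.e. the restriction of $y$ to the coordinates $(i,j)$ with $i\neq j$ together with the extra coordinate is a scalar multiple of $(1,1,\dots,1,-(n-2))$.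
   Context: A derangement of $\{1,\dots,n\}$ is a permutation with no fixed points; $S(n)$ is the symmetric group on $\{1,\dots,n\}$. *)

theory Defs
  imports Complex_Main "HOL-Combinatorics.Permutations"
begin

definition derangement :: "nat \<Rightarrow> (nat \<Rightarrow> nat) \<Rightarrow> bool" where
  "derangement n p \<longleftrightarrow> p permutes {1..n} \<and> (\<forall>i\<in>{1..n}. p i \<noteq> i)"

definition H_entry :: "(nat \<Rightarrow> nat) \<Rightarrow> nat \<times> nat \<Rightarrow> real" where
  "H_entry p ij = (if p (fst ij) = snd ij then 1 else 0)"

text \<open>Row p of [N|1] applied to the vector (y, t).\<close>
definition N1_row_apply :: "nat \<Rightarrow> (nat \<Rightarrow> nat) \<Rightarrow> (nat \<times> nat \<Rightarrow> real) \<Rightarrow> real \<Rightarrow> real" where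
  "N1_row_apply n p y t = (\<Sum>ij\<in>{1..n-1} \<times> {1..n-1}. H_entry p ij * y ij) + 1 * t"

end

theory Submission
  imports Defs "HOL-Combinatorics.Cycles"
begin

lemma cyc_map: "distinct cs \<Longrightarrow> map (cycle_of_list cs) cs = rotate1 cs"
  using cyclic_rotation[of cs 1] by simp

lemma cyc_der:
  assumes "distinct cs" "set cs = {1..n}" "2 \<le> length cs"
  shows "derangement n (cycle_of_list cs)"
  unfolding derangement_def
proof
  show "cycle_of_list cs permutes {1..n}" using cycle_permutes[of cs] assms by simp
  show "\<forall>i\<in>{1..n}. cycle_of_list cs i \<noteq> i"
  proof
    fix x assume "x \<in> {1..n}"
    then obtain i where i: "i < length cs" "cs ! i = x" using assms(2) by (metis in_set_conv_nth)
    have "cycle_of_list cs x = rotate1 cs ! i"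
      using cyc_map[OF assms(1)] i by (metis nth_map)
    also have "\<dots> = cs ! (Suc i mod length cs)"
      using i(1) by (simp add: rotate1_rotate_swap nth_rotate[of i cs 1, simplified])
    finally have e: "cycle_of_list cs x = cs ! (Suc i mod length cs)" .
    have "Suc i mod length cs \<noteq> i"
      using i(1) assms(3)
    proof (cases "Suc i < length cs")
      case False
      then have "Suc i = length cs" using i(1) by simp
      then show ?thesis using assms(3) by simp
    qed simp
    moreover have "Suc i mod length cs < length cs" proof -
      have "0 < length cs" using i(1) by linarith
      then show ?thesis by simp
    qed
    ultimately show "cycle_of_list cs x \<noteq> x"
      using e i assms(1) nth_eq_iff_index_eq by metis
  qed
qed

definition G :: "nat \<Rightarrow> (nat \<Rightarrow> nat) \<Rightarrow> (nat \<times> nat \<Rightarrow> real) \<Rightarrow> real" where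
  "G n p y = (\<Sum>i\<in>{1..n-1}. if p i \<in> {1..n-1} then y (i, p i) else 0)"

lemma row_G: "N1_row_apply n p y t = G n p y + t"
proof -
  have "(\<Sum>ij\<in>{1..n-1} \<times> {1..n-1}. H_entry p ij * y ij)
      = (\<Sum>i\<in>{1..n-1}. \<Sum>j\<in>{1..n-1}. H_entry p (i,j) * y (i,j))"
    by (simp add: sum.cartesian_product)
  also have "\<dots> = G n p y"
    unfolding G_def
  proof (rule sum.cong[OF refl])
    fix i
    have "(\<Sum>j\<in>{1..n-1}. H_entry p (i,j) * y (i,j)) = (\<Sum>j\<in>{1..n-1}. if p i = j then y (i, p i) else 0)"
      by (rule sum.cong[OF refl]) (simp add: H_entry_def)
    also have "\<dots> = (if p i \<in> {1..n-1} then y (i, p i) else 0)"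
      using sum.delta'[of "{1..n-1}" "p i" "\<lambda>_. y (i, p i)"] by simp
    finally show "(\<Sum>j\<in>{1..n-1}. H_entry p (i,j) * y (i,j)) = (if p i \<in> {1..n-1} then y (i, p i) else 0)" .
  qed
  finally show ?thesis unfolding N1_row_apply_def by simp
qed

lemma sum_rem2:
  fixes f :: "nat \<Rightarrow> real"
  assumes "finite A" "a \<in> A" "l \<in> A" "a \<noteq> l"
  shows "sum f A = f a + f l + sum f (A - {a,l})"
proof -
  have "sum f A = f a + sum f (A - {a})" using assms by (simp add: sum.remove)
  moreover have "sum f (A - {a}) = f l + sum f (A - {a} - {l})"
    using assms by (intro sum.remove) auto
  moreover have "A - {a} - {l} = A - {a,l}" by auto
  ultimately show ?thesis by simp
qed

lemma sum_diff2:
  fixes f h :: "nat \<Rightarrow> real"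
  assumes "finite A" "a \<in> A" "l \<in> A" "a \<noteq> l" "\<forall>i\<in>A-{a,l}. f i = h i"
  shows "sum f A - sum h A = f a + f l - h a - h l"
proof -
  have "sum f (A - {a,l}) = sum h (A - {a,l})" using assms(5) by simp
  then show ?thesis using sum_rem2[OF assms(1-4), of f] sum_rem2[OF assms(1-4), of h] by simp
qed

lemma big_cycle:
  fixes x1 x2 x3 x4 n :: nat
  assumes "distinct [x1,x2,x3,x4]" "set [x1,x2,x3,x4] \<subseteq> {1..n}"
  defines "cs \<equiv> [x1,x2,x3,x4] @ sorted_list_of_set ({1..n} - {x1,x2,x3,x4})"
  shows "derangement n (cycle_of_list cs) \<and> cycle_of_list cs x1 = x2
     \<and> cycle_of_list cs x2 = x3 \<and> cycle_of_list cs x3 = x4"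
proof -
  have d: "distinct cs" using assms(1) unfolding cs_def by simp
  have s: "set cs = {1..n}" using assms(2) unfolding cs_def by auto
  have l: "2 \<le> length cs" unfolding cs_def by simp
  have "map (cycle_of_list cs) cs = rotate1 cs" by (rule cyc_map[OF d])
  then have "cycle_of_list cs x1 = x2 \<and> cycle_of_list cs x2 = x3 \<and> cycle_of_list cs x3 = x4"
    unfolding cs_def by simp
  then show ?thesis using cyc_der[OF d s l] by simp
qed

lemma rel1:
  assumes hyp: "\<And>p. derangement n p \<Longrightarrow> G n p y + t = 0"
    and "a \<in> {1..n-1}" "l \<in> {1..n-1}" "b \<in> {1..n-1}" "a \<noteq> l" "a \<noteq> b" "l \<noteq> b"
  shows "y (a,b) = y (l,b)"
proof -
  have "distinct [l,n,a,b]" "set [l,n,a,b] \<subseteq> {1..n}" using assms(2-7) by auto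
  from big_cycle[OF this] obtain p where p: "derangement n p" "p l = n" "p n = a" "p a = b"
    by blast
  have pp: "p permutes {1..n}" and pd: "\<forall>i\<in>{1..n}. p i \<noteq> i" using p(1) unfolding derangement_def by auto
  define q where "q = p \<circ> transpose a l"
  have qp: "q permutes {1..n}" unfolding q_def
    using assms(2,3) by (intro permutes_compose[OF permutes_swap_id pp]) auto
  have "derangement n q" unfolding derangement_def
  proof (intro conjI qp ballI)
    fix i assume i: "i \<in> {1..n}"
    show "q i \<noteq> i"
    proof -
      have "q a = n" "q l = b" unfolding q_def using p by auto
      moreover have "i \<noteq> a \<Longrightarrow> i \<noteq> l \<Longrightarrow> q i = p i" unfolding q_def by simp
      moreover have "n \<noteq> a" "b \<noteq> l" using assms(2-7) by auto
      ultimately show ?thesis using pd i by (metis)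
    qed
  qed
  then have q0: "G n q y + t = 0" by (rule hyp)
  have p0: "G n p y + t = 0" by (rule hyp[OF p(1)])
  have agree: "\<forall>i\<in>{1..n-1}-{a,l}. q i = p i"
  proof
    fix i assume i: "i \<in> {1..n-1}-{a,l}"
    then show "q i = p i" unfolding q_def by simp
  qed
  have "G n p y - G n q y =
     (if p a \<in> {1..n-1} then y (a, p a) else 0) + (if p l \<in> {1..n-1} then y (l, p l) else 0)
     - (if q a \<in> {1..n-1} then y (a, q a) else 0) - (if q l \<in> {1..n-1} then y (l, q l) else 0)"
    unfolding G_def
    by (rule sum_diff2) (use assms(2-7) agree in auto)
  moreover have "q a = n" "q l = b" unfolding q_def using p by auto
  moreover have "n \<notin> {1..n-1}" "Suc 0 \<le> n" "b \<in> {1..n-1}" using assms(4) by auto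
  ultimately have "G n p y - G n q y = y (a,b) - y (l,b)" using p by simp
  then show ?thesis using p0 q0 by simp
qed

lemma rel2:
  assumes hyp: "\<And>p. derangement n p \<Longrightarrow> G n p y + t = 0"
    and "a \<in> {1..n-1}" "b \<in> {1..n-1}" "k \<in> {1..n-1}" "a \<noteq> b" "a \<noteq> k" "b \<noteq> k"
  shows "y (a,b) = y (a,k)"
proof -
  have "distinct [a,b,n,k]" "set [a,b,n,k] \<subseteq> {1..n}" using assms(2-7) by auto
  from big_cycle[OF this] obtain p where p: "derangement n p" "p a = b" "p b = n" "p n = k"
    by blast
  have pp: "p permutes {1..n}" and pd: "\<forall>i\<in>{1..n}. p i \<noteq> i" using p(1) unfolding derangement_def by auto
  have inj: "inj p" using pp by (rule permutes_inj)
  define q where "q = transpose b k \<circ> p"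
  have qp: "q permutes {1..n}" unfolding q_def
    using assms(3,4) by (intro permutes_compose[OF pp permutes_swap_id]) auto
  have pb: "p i = b \<Longrightarrow> i = a" for i using inj p(2) by (metis injD)
  have pk: "p i = k \<Longrightarrow> i = n" for i using inj p(4) by (metis injD)
  have "derangement n q" unfolding derangement_def
  proof (intro conjI qp ballI)
    fix i assume i: "i \<in> {1..n}"
    show "q i \<noteq> i"
    proof -
      have "q a = k" "q n = b" unfolding q_def using p by auto
      moreover have "p i \<noteq> b \<Longrightarrow> p i \<noteq> k \<Longrightarrow> q i = p i" unfolding q_def by simp
      moreover have "k \<noteq> a" "b \<noteq> n" using assms(2-7) by auto
      ultimately show ?thesis using pd i pb pk by (metis)
    qed
  qed
  then have q0: "G n q y + t = 0" by (rule hyp)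
  have p0: "G n p y + t = 0" by (rule hyp[OF p(1)])
  have agree: "\<forall>i\<in>{1..n-1}-{a,b}. q i = p i"
  proof
    fix i assume i: "i \<in> {1..n-1}-{a,b}"
    then have "p i \<noteq> b" "p i \<noteq> k" using pb pk by auto
    then show "q i = p i" unfolding q_def by simp
  qed
  have "G n p y - G n q y =
     (if p a \<in> {1..n-1} then y (a, p a) else 0) + (if p b \<in> {1..n-1} then y (b, p b) else 0)
     - (if q a \<in> {1..n-1} then y (a, q a) else 0) - (if q b \<in> {1..n-1} then y (b, q b) else 0)"
    unfolding G_def
    by (rule sum_diff2) (use assms(2-7) agree in auto)
  moreover have "q a = k" "q b = n" unfolding q_def using p assms(2-7) by auto
  moreover have "n \<notin> {1..n-1}" "Suc 0 \<le> n" "b \<in> {1..n-1}" "k \<in> {1..n-1}" using assms(3,4) by auto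
  ultimately have "G n p y - G n q y = y (a,b) - y (a,k)" using p by simp
  then show ?thesis using p0 q0 by simp
qed

lemma all_eq:
  assumes hyp: "\<And>p. derangement n p \<Longrightarrow> G n p y + t = 0" and n4: "n \<ge> 4"
    and "i \<in> {1..n-1}" "j \<in> {1..n-1}" "k \<in> {1..n-1}" "l \<in> {1..n-1}" "i \<noteq> j" "k \<noteq> l"
  shows "y (i,j) = y (k,l)"
proof -
  define b :: nat where "b = (if 1 \<noteq> i \<and> 1 \<noteq> k then 1 else if 2 \<noteq> i \<and> 2 \<noteq> k then 2 else 3)"
  have b: "b \<in> {1..n-1}" "b \<noteq> i" "b \<noteq> k" using n4 unfolding b_def by auto
  have 1: "y (i,j) = y (i,b)"
    using rel2[OF hyp, of i j b] assms b by (cases "j = b") auto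
  have 2: "y (i,b) = y (k,b)"
    using rel1[OF hyp, of i k b] assms b by (cases "i = k") auto
  have 3: "y (k,b) = y (k,l)"
    using rel2[OF hyp, of k b l] assms b by (cases "l = b") auto
  show ?thesis using 1 2 3 by simp
qed

theorem lemma12:
  fixes n :: nat and y :: "nat \<times> nat \<Rightarrow> real" and t :: real
  assumes "n \<ge> 3"
    and "\<And>p. derangement n p \<Longrightarrow> N1_row_apply n p y t = 0"
  shows "\<exists>c::real. (\<forall>i\<in>{1..n-1}. \<forall>j\<in>{1..n-1}. i \<noteq> j \<longrightarrow> y (i, j) = c)
                 \<and> t = - (real n - 2) * c"
proof -
  have hyp: "G n p y + t = 0" if "derangement n p" for p
    using assms(2)[OF that] row_G[of n p y t] by simp
  show ?thesis
  proof (cases "n = 3")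
    case True
    have st: "set [1,2,3::nat] = {1..3}" by auto
    have st2: "set [1,3,2::nat] = {1..3}" by auto
    have d1: "derangement 3 (cycle_of_list [1,2,3::nat])"
      by (rule cyc_der[OF _ st]) simp_all
    have d2: "derangement 3 (cycle_of_list [1,3,2::nat])"
      by (rule cyc_der[OF _ st2]) simp_all
    have m1: "map (cycle_of_list [1,2,3::nat]) [1,2,3] = rotate1 [1,2,3]" by (rule cyc_map) simp
    have m2: "map (cycle_of_list [1,3,2::nat]) [1,3,2] = rotate1 [1,3,2]" by (rule cyc_map) simp
    have v1: "cycle_of_list [1,2,3::nat] 1 = 2" "cycle_of_list [1,2,3::nat] 2 = 3"
      using m1 by simp_all
    have v2: "cycle_of_list [1,3,2::nat] 1 = 3" "cycle_of_list [1,3,2::nat] 2 = 1"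
      using m2 by simp_all
    have s: "{1..3-1::nat} = {1,2}" by auto
    have G: "G 3 f y = (if f 1 \<in> {1,2} then y (1, f 1) else 0) + (if f 2 \<in> {1,2} then y (2, f 2) else 0)" for f
      unfolding G_def s by simp
    have e1: "y (1,2) + t = 0" using hyp[OF d1[folded True]] unfolding True G v1 by simp
    have e2: "y (2,1) + t = 0" using hyp[OF d2[folded True]] unfolding True G v2 by simp
    show ?thesis
    proof (intro exI conjI ballI impI)
      fix i j assume "i \<in> {1..n-1}" "j \<in> {1..n-1}" "i \<noteq> j"
      then have "(i = 1 \<and> j = 2) \<or> (i = 2 \<and> j = 1)" using True by auto
      then show "y (i,j) = y (1,2)" using e1 e2 by auto
    next
      show "t = - (real n - 2) * y (1,2)" using e1 True by simp
    qed
  next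
    case False
    then have n4: "n \<ge> 4" using assms(1) by simp
    have "distinct [1,n,2,3]" "set [1,n,2,3] \<subseteq> {1..n}" using n4 by auto
    from big_cycle[OF this] obtain p where p: "derangement n p" "p 1 = n"
      by blast
    have pp: "p permutes {1..n}" and pd: "\<forall>i\<in>{1..n}. p i \<noteq> i" using p(1) unfolding derangement_def by auto
    have inj: "inj p" using pp by (rule permutes_inj)
    have c12: "(1::nat) \<in> {1..n-1}" "(2::nat) \<in> {1..n-1}" using n4 by auto
    have "G n p y = (if p 1 \<in> {1..n-1} then y (1, p 1) else 0)
        + (\<Sum>i\<in>{1..n-1}-{1}. if p i \<in> {1..n-1} then y (i, p i) else 0)"
      unfolding G_def by (rule sum.remove) (use c12 in auto)
    moreover have "(\<Sum>i\<in>{1..n-1}-{1}. if p i \<in> {1..n-1} then y (i, p i) else 0)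
        = (\<Sum>i\<in>{1..n-1}-{1}. y (1,2))"
    proof (rule sum.cong[OF refl])
      fix i assume i: "i \<in> {1..n-1}-{1}"
      have "i \<in> {1..n}" using i by auto
      then have "p i \<in> {1..n}" using pp by (simp only: permutes_in_image)
      moreover have "p i \<noteq> n" using inj p(2) i by (metis injD DiffE singletonI)
      ultimately have pi: "p i \<in> {1..n-1}" by auto
      moreover have "p i \<noteq> i" using pd i by auto
      ultimately show "(if p i \<in> {1..n-1} then y (i, p i) else 0) = y (1,2)"
        using all_eq[OF hyp n4, of i "p i" 1 2] i c12 by auto
    qed
    moreover have "(\<Sum>i\<in>{1..n-1}-{1}. y (1,2)) = real (n - 2) * y (1,2)"
      using c12 by (simp add: card_Diff_singleton)
    moreover have "\<not> n \<le> n - Suc 0" using n4 by arith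
    ultimately have "G n p y = real (n-2) * y (1,2)" using p(2) n4 by simp
    moreover have "real (n-2) = real n - 2" using n4 by simp
    ultimately have "t = - (real n - 2) * y (1,2)" using hyp[OF p(1)] by (simp add: algebra_simps)
    moreover have "\<forall>i\<in>{1..n-1}. \<forall>j\<in>{1..n-1}. i \<noteq> j \<longrightarrow> y (i, j) = y (1,2)"
    proof (intro ballI impI)
      fix i j assume "i \<in> {1..n-1}" "j \<in> {1..n-1}" "i \<noteq> j"
      then show "y (i, j) = y (1,2)" using all_eq[OF hyp n4, of i j 1 2] c12 by simp
    qed
    ultimately show ?thesis by blast
  qed
qed

end
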